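(* Let $K_{A_1,B_1},\ldots,K_{A_q,B_q}$ be demand graphs with $|A_i|=\alpha$, $|B_i|=\beta$, reordered such that $\mathrm{mincut}_G(K_{A_1,B_1})< \ldots < \mathrm{mincut}_G(K_{A_q,B_q})$. Then the polynomials $P_{1}, \ldots, P_{q}$ are linearly independent.
   Context: $G=(V,E,w)$ is an undirected edge-weighted graph. For a partition $\Pi$ of $V$, $\Pi(v)$ is the part containing $v$, and $\mathrm{cut}_G(\Pi)=\sum_{uv\in E:\Pi(u)\neq\Pi(v)} w(uv)$. A partition agrees with a demand graph $D$ if every $uv\in D$ has $\Pi(u)\neq\Pi(v)$, and $\mathrm{mincut}_G(D)$ is the minimum of $\mathrm{cut}_G(\Pi)$ over partitions agreeing with $D$. For disjoint $A,B\subseteq V$, $K_{A,B}$ is the complete bipartite demand graph between $A$ and $B$; an optimal partition may be assumed to have two parts. Each vertex $v$ gets a variable $\phi_v$; a two-part partition $\{U,V\setminus U\}$ is viewed as a $0/1$ vector in $\{0,1\}^n$ at which polynomials are evaluated over $\mathbb{F}_2$. For each $j$, fix $a_j\in A_j$, $b_j\in B_j$ and define $P_j=\prod_{b\in B_j}(\phi_{a_j}-\phi_b)\cdot\prod_{a\in A_j\setminus\{a_j\}}(\phi_a-\phi_{b_j})$, a polynomial of degree $\alpha+\beta-1$. A two-part partition agrees with $K_{A_j,B_j}$ iff $P_j$ evaluated at it is nonzero. *)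

theory Defs
  imports Complex_Main "HOL-Library.Poly_Mapping" "HOL-Library.Z2" "HOL-Library.Disjoint_Sets"
begin

definition graph_wf :: "'v set \<Rightarrow> 'v set set \<Rightarrow> ('v set \<Rightarrow> real) \<Rightarrow> bool" where
  "graph_wf V E w \<longleftrightarrow> finite V \<and>
     E \<subseteq> {e. \<exists>u v. u \<in> V \<and> v \<in> V \<and> u \<noteq> v \<and> e = {u, v}} \<and>
     (\<forall>e\<in>E. w e \<ge> 0)"

definition part_of :: "'v set set \<Rightarrow> 'v \<Rightarrow> 'v set" where
  "part_of P v = (THE X. X \<in> P \<and> v \<in> X)"

definition cut_val :: "'v set set \<Rightarrow> ('v set \<Rightarrow> real) \<Rightarrow> 'v set set \<Rightarrow> real" where
  "cut_val E w P = (\<Sum>e\<in>E. if (\<exists>u v. e = {u, v} \<and> part_of P u \<noteq> part_of P v) then w e else 0)"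

text \<open>Demand graph D given as a set of vertex pairs.\<close>
definition agrees :: "'v set set \<Rightarrow> ('v \<times> 'v) set \<Rightarrow> bool" where
  "agrees P D \<longleftrightarrow> (\<forall>(u, v)\<in>D. part_of P u \<noteq> part_of P v)"

definition mincut :: "'v set \<Rightarrow> 'v set set \<Rightarrow> ('v set \<Rightarrow> real) \<Rightarrow> ('v \<times> 'v) set \<Rightarrow> real" where
  "mincut V E w D = Min {cut_val E w P | P. partition_on V P \<and> agrees P D}"

definition K_bip :: "'v set \<Rightarrow> 'v set \<Rightarrow> ('v \<times> 'v) set" where
  "K_bip A B = A \<times> B"

text \<open>Multivariate polynomials over F_2 (type bit) in variables indexed by vertices.\<close>
type_synonym 'v mpoly2 = "('v \<Rightarrow>\<^sub>0 nat) \<Rightarrow>\<^sub>0 bit"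

definition Var2 :: "'v \<Rightarrow> 'v mpoly2" where
  "Var2 v = Poly_Mapping.single (Poly_Mapping.single v 1) 1"

definition Const2 :: "bit \<Rightarrow> 'v mpoly2" where
  "Const2 c = Poly_Mapping.single 0 c"

definition P_poly :: "'v set \<Rightarrow> 'v set \<Rightarrow> 'v \<Rightarrow> 'v \<Rightarrow> 'v mpoly2" where
  "P_poly A B a b = (\<Prod>y\<in>B. Var2 a - Var2 y) * (\<Prod>x\<in>A - {a}. Var2 x - Var2 b)"

end

theory Submission
  imports Defs
begin

definition mon :: "('v \<Rightarrow> bit) \<Rightarrow> ('v \<Rightarrow>\<^sub>0 nat) \<Rightarrow> bit" where
  "mon f m = (\<Prod>v\<in>Poly_Mapping.keys m. f v ^ Poly_Mapping.lookup m v)"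

lemma mon_superset: "finite S \<Longrightarrow> Poly_Mapping.keys m \<subseteq> S \<Longrightarrow> mon f m = (\<Prod>v\<in>S. f v ^ Poly_Mapping.lookup m v)"
  unfolding mon_def by (rule prod.mono_neutral_left) (auto simp: in_keys_iff)

lemma mon_add: "mon f (m1 + m2) = mon f m1 * mon f m2"
proof -
  let ?S = "Poly_Mapping.keys m1 \<union> Poly_Mapping.keys m2"
  have "mon f (m1 + m2) = (\<Prod>v\<in>?S. f v ^ Poly_Mapping.lookup (m1+m2) v)"
    by (rule mon_superset) (auto simp: in_keys_iff lookup_add)
  also have "\<dots> = (\<Prod>v\<in>?S. f v ^ Poly_Mapping.lookup m1 v) * (\<Prod>v\<in>?S. f v ^ Poly_Mapping.lookup m2 v)"
    by (simp only: lookup_add power_add prod.distrib)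
  also have "\<dots> = mon f m1 * mon f m2"
  proof -
    have h1: "mon f m1 = (\<Prod>v\<in>?S. f v ^ Poly_Mapping.lookup m1 v)" by (rule mon_superset) auto
    have h2: "mon f m2 = (\<Prod>v\<in>?S. f v ^ Poly_Mapping.lookup m2 v)" by (rule mon_superset) auto
    show ?thesis by (simp only: h1 h2)
  qed
  finally show ?thesis .
qed

definition ev :: "('v \<Rightarrow> bit) \<Rightarrow> 'v mpoly2 \<Rightarrow> bit" where
  "ev f p = (\<Sum>m\<in>Poly_Mapping.keys p. Poly_Mapping.lookup p m * mon f m)"

lemma ev_superset: "finite S \<Longrightarrow> Poly_Mapping.keys p \<subseteq> S \<Longrightarrow> ev f p = (\<Sum>m\<in>S. Poly_Mapping.lookup p m * mon f m)"
  unfolding ev_def by (rule sum.mono_neutral_left) (auto simp: in_keys_iff)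

lemma ev_add: "ev f (p + q) = ev f p + ev f q"
proof -
  let ?S = "Poly_Mapping.keys p \<union> Poly_Mapping.keys q"
  have "ev f (p + q) = (\<Sum>m\<in>?S. Poly_Mapping.lookup (p+q) m * mon f m)"
    by (rule ev_superset) (auto simp: in_keys_iff lookup_add)
  also have "\<dots> = (\<Sum>m\<in>?S. Poly_Mapping.lookup p m * mon f m) + (\<Sum>m\<in>?S. Poly_Mapping.lookup q m * mon f m)"
    by (simp only: lookup_add distrib_right sum.distrib)
  also have "\<dots> = ev f p + ev f q"
  proof -
    have h1: "ev f p = (\<Sum>m\<in>?S. Poly_Mapping.lookup p m * mon f m)" by (rule ev_superset) auto
    have h2: "ev f q = (\<Sum>m\<in>?S. Poly_Mapping.lookup q m * mon f m)" by (rule ev_superset) auto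
    show ?thesis by (simp only: h1 h2)
  qed
  finally show ?thesis .
qed

lemma ev_zero: "ev f 0 = 0" by (simp add: ev_def)

lemma ev_diff: "ev f (p - q) = ev f p - ev f q"
proof -
  have "ev f p = ev f (p - q) + ev f q" using ev_add[of f "p - q" q] by (simp only: diff_add_cancel)
  then show ?thesis by (simp only: eq_diff_eq)
qed

lemma ev_sum: "ev f (sum g I) = (\<Sum>i\<in>I. ev f (g i))"
  by (induction I rule: infinite_finite_induct) (auto simp: ev_zero ev_add)

lemma ev_single: "ev f (Poly_Mapping.single m c) = c * mon f m"
  by (subst ev_superset[of "{m}"]) (auto simp: lookup_single)

lemma decomp: "p = (\<Sum>m\<in>Poly_Mapping.keys p. Poly_Mapping.single m (Poly_Mapping.lookup p m))"
  by (rule poly_mapping_eqI) (simp add: lookup_sum lookup_single when_def in_keys_iff)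

lemma ev_mult: "ev f (p * q) = ev f p * ev f q"
proof -
  have "p * q = (\<Sum>m\<in>Poly_Mapping.keys p. Poly_Mapping.single m (Poly_Mapping.lookup p m)) * (\<Sum>n\<in>Poly_Mapping.keys q. Poly_Mapping.single n (Poly_Mapping.lookup q n))"
    using decomp[of p] decomp[of q] by simp
  also have "\<dots> = (\<Sum>m\<in>Poly_Mapping.keys p. \<Sum>n\<in>Poly_Mapping.keys q. Poly_Mapping.single (m+n) (Poly_Mapping.lookup p m * Poly_Mapping.lookup q n))"
    by (simp add: sum_product mult_single)
  finally have "ev f (p*q) = (\<Sum>m\<in>Poly_Mapping.keys p. \<Sum>n\<in>Poly_Mapping.keys q. Poly_Mapping.lookup p m * Poly_Mapping.lookup q n * mon f (m+n))"
    by (simp add: ev_sum ev_single)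
  also have "\<dots> = (\<Sum>m\<in>Poly_Mapping.keys p. \<Sum>n\<in>Poly_Mapping.keys q. (Poly_Mapping.lookup p m * mon f m) * (Poly_Mapping.lookup q n * mon f n))"
    by (intro sum.cong refl) (simp only: mon_add mult_ac)
  also have "\<dots> = ev f p * ev f q"
    by (simp only: ev_def sum_product)
  finally show ?thesis .
qed

lemma ev_one: "ev (f::'v \<Rightarrow> bit) 1 = 1"
proof -
  have h: "ev f (Poly_Mapping.single 0 1 :: 'v mpoly2) = 1"
    by (simp only: ev_single mon_def keys_zero prod.empty mult_1)
  then show ?thesis by simp
qed

lemma ev_prod: "ev f (prod g I) = (\<Prod>i\<in>I. ev f (g i))"
  by (induction I rule: infinite_finite_induct) (auto simp: ev_one ev_mult)

lemma ev_Var2: "ev f (Var2 v) = f v"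
  by (simp add: Var2_def ev_single mon_def)

lemma ev_Const2: "ev f (Const2 c) = c"
  by (simp add: Const2_def ev_single mon_def)

lemma ev_P: "ev f (P_poly A B a b) = (\<Prod>y\<in>B. f a - f y) * (\<Prod>x\<in>A - {a}. f x - f b)"
  by (simp add: P_poly_def ev_mult ev_prod ev_diff ev_Var2)


lemma part_of_eq:
  assumes "partition_on V P" "X \<in> P" "v \<in> X"
  shows "part_of P v = X"
  unfolding part_of_def
proof (rule the_equality)
  show "X \<in> P \<and> v \<in> X" using assms by auto
next
  fix Y assume "Y \<in> P \<and> v \<in> Y"
  then show "Y = X" using assms unfolding partition_on_def disjoint_def by blast
qed

lemma part_of_in:
  assumes "partition_on V P" "v \<in> V"
  shows "part_of P v \<in> P \<and> v \<in> part_of P v"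
proof -
  obtain X where "X \<in> P" "v \<in> X" using assms partition_onD1 by blast
  then show ?thesis using part_of_eq[OF assms(1)] by simp
qed

lemma two_part:
  assumes "U \<subseteq> V" "U \<noteq> {}" "V - U \<noteq> {}"
  shows "partition_on V {U, V - U}"
    and "\<And>v. v \<in> V \<Longrightarrow> part_of {U, V - U} v = (if v \<in> U then U else V - U)"
proof -
  show P: "partition_on V {U, V - U}"
    using assms by (auto simp: partition_on_def disjoint_def)
  fix v assume "v \<in> V"
  then show "part_of {U, V - U} v = (if v \<in> U then U else V - U)"
    by (cases "v \<in> U") (simp_all add: part_of_eq[OF P])
qed

lemma finite_cuts:
  assumes "finite V"
  shows "finite {cut_val E w P | P. partition_on V P \<and> agrees P D}"
proof -
  have "{cut_val E w P | P. partition_on V P \<and> agrees P D} \<subseteq> cut_val E w ` Pow (Pow V)"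
    by (auto dest: partition_onD1)
  then show ?thesis using assms finite_subset by blast
qed

lemma mincut_le:
  assumes "finite V" "partition_on V P" "agrees P D"
  shows "mincut V E w D \<le> cut_val E w P"
  unfolding mincut_def using finite_cuts[OF assms(1)] assms(2,3) by (intro Min_le) auto

lemma mincut_attained:
  assumes "finite V" "A \<subseteq> V" "B \<subseteq> V" "A \<inter> B = {}" "A \<noteq> {}" "B \<noteq> {}"
  shows "\<exists>P. partition_on V P \<and> agrees P (K_bip A B) \<and> cut_val E w P = mincut V E w (K_bip A B)"
proof -
  have ne: "V - A \<noteq> {}" using assms by blast
  have "agrees {A, V - A} (K_bip A B)"
    unfolding agrees_def K_bip_def
  proof (clarify)
    fix x y assume xy: "x \<in> A" "y \<in> B" and eq: "part_of {A, V - A} x = part_of {A, V - A} y"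
    have "x \<in> V" "y \<in> V" "y \<notin> A" using xy assms by auto
    then show False using eq xy two_part(2)[OF assms(2,5) ne] by auto
  qed
  then have "{cut_val E w P | P. partition_on V P \<and> agrees P (K_bip A B)} \<noteq> {}"
    using two_part(1)[OF assms(2,5) ne] by blast
  from Min_in[OF finite_cuts[OF assms(1)] this] show ?thesis
    unfolding mincut_def by auto
qed


lemma key:
  assumes g: "graph_wf V E w" and AB: "A \<subseteq> V" "B \<subseteq> V" "A \<inter> B = {}" "A \<noteq> {}" "B \<noteq> {}"
  shows "\<exists>U. A \<subseteq> U \<and> U \<subseteq> V \<and> U \<inter> B = {} \<and>
     (\<forall>A' B'. A' \<subseteq> V \<longrightarrow> B' \<subseteq> V \<longrightarrow> (\<forall>x\<in>A'. \<forall>y\<in>B'. (x \<in> U \<longleftrightarrow> y \<notin> U)) \<longrightarrow>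
        mincut V E w (K_bip A' B') \<le> mincut V E w (K_bip A B))"
proof -
  have fin: "finite V" using g by (simp add: graph_wf_def)
  obtain P where P: "partition_on V P" "agrees P (K_bip A B)"
    and Pc: "cut_val E w P = mincut V E w (K_bip A B)"
    using mincut_attained[OF fin AB] by blast
  define U where "U = {v\<in>V. part_of P v \<inter> A \<noteq> {}}"
  have AU: "A \<subseteq> U"
  proof
    fix x assume "x \<in> A"
    then show "x \<in> U" using part_of_in[OF P(1), of x] AB unfolding U_def by auto
  qed
  have UV: "U \<subseteq> V" unfolding U_def by auto
  have UB: "U \<inter> B = {}"
  proof (rule ccontr)
    assume "U \<inter> B \<noteq> {}"
    then obtain y x where y: "y \<in> B" "y \<in> V" and x: "x \<in> A" "x \<in> part_of P y"
      unfolding U_def by auto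
    have "x \<in> V" using x AB by auto
    have "part_of P x = part_of P y"
      using part_of_eq[OF P(1) _ x(2)] part_of_in[OF P(1) y(2)] by auto
    then show False using P(2) x y unfolding agrees_def K_bip_def by auto
  qed
  have ne1: "U \<noteq> {}" using AU AB by auto
  have ne2: "V - U \<noteq> {}" using UB AB by auto
  note Pi = two_part[OF UV ne1 ne2]
  have cutle: "cut_val E w {U, V - U} \<le> cut_val E w P"
    unfolding cut_val_def
  proof (rule sum_mono)
    fix e assume eE: "e \<in> E"
    show "(if \<exists>u v. e = {u, v} \<and> part_of {U, V - U} u \<noteq> part_of {U, V - U} v then w e else 0)
       \<le> (if \<exists>u v. e = {u, v} \<and> part_of P u \<noteq> part_of P v then w e else 0)"
    proof (cases "\<exists>u v. e = {u, v} \<and> part_of {U, V - U} u \<noteq> part_of {U, V - U} v")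
      case True
      then obtain u v where uv: "e = {u, v}" "part_of {U, V - U} u \<noteq> part_of {U, V - U} v" by blast
      have "e \<subseteq> V" using g eE unfolding graph_wf_def by blast
      then have V: "u \<in> V" "v \<in> V" using uv by auto
      have "part_of P u \<noteq> part_of P v"
      proof
        assume "part_of P u = part_of P v"
        then have "u \<in> U \<longleftrightarrow> v \<in> U" unfolding U_def using V by auto
        then show False using uv(2) Pi(2)[OF V(1)] Pi(2)[OF V(2)] by auto
      qed
      then show ?thesis using uv True by auto
    next
      case False
      have "w e \<ge> 0" using g eE unfolding graph_wf_def by blast
      then show ?thesis using False by auto
    qed
  qed
  show ?thesis
  proof (intro exI conjI allI impI)
    fix A' B' assume A'B': "A' \<subseteq> V" "B' \<subseteq> V" "\<forall>x\<in>A'. \<forall>y\<in>B'. (x \<in> U \<longleftrightarrow> y \<notin> U)"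
    have "agrees {U, V - U} (K_bip A' B')"
      unfolding agrees_def K_bip_def
    proof clarify
      fix x y assume xy: "x \<in> A'" "y \<in> B'" and eq: "part_of {U, V - U} x = part_of {U, V - U} y"
      have V: "x \<in> V" "y \<in> V" using xy A'B' by auto
      have "x \<in> U \<longleftrightarrow> y \<notin> U" using A'B'(3) xy by blast
      then show False using eq Pi(2)[OF V(1)] Pi(2)[OF V(2)] ne1 by (auto split: if_splits)
    qed
    from mincut_le[OF fin Pi(1) this, of E w] cutle Pc
    show "mincut V E w (K_bip A' B') \<le> mincut V E w (K_bip A B)" by linarith
  qed (use AU UV UB in auto)
qed


theorem lemma6:
  fixes V :: "'v set" and E :: "'v set set" and w :: "'v set \<Rightarrow> real"
    and q \<alpha> \<beta> :: nat and A B :: "nat \<Rightarrow> 'v set" and a b :: "nat \<Rightarrow> 'v"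
  assumes "graph_wf V E w"
    and "\<And>j. j < q \<Longrightarrow> A j \<subseteq> V \<and> B j \<subseteq> V \<and> A j \<inter> B j = {}"
    and "\<And>j. j < q \<Longrightarrow> card (A j) = \<alpha> \<and> card (B j) = \<beta>"
    and "\<And>j. j < q \<Longrightarrow> a j \<in> A j \<and> b j \<in> B j"
    and "\<And>i j. i < j \<Longrightarrow> j < q \<Longrightarrow>
           mincut V E w (K_bip (A i) (B i)) < mincut V E w (K_bip (A j) (B j))"
  shows "\<forall>c :: nat \<Rightarrow> bit.
           (\<Sum>j<q. Const2 (c j) * P_poly (A j) (B j) (a j) (b j)) = 0 \<longrightarrow> (\<forall>j<q. c j = 0)"
proof (rule allI, rule impI)
  fix c :: "nat \<Rightarrow> bit"
  assume sum0: "(\<Sum>j<q. Const2 (c j) * P_poly (A j) (B j) (a j) (b j)) = 0"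
  show "\<forall>j<q. c j = 0"
  proof (rule ccontr)
    assume "\<not> (\<forall>j<q. c j = 0)"
    then have ex: "\<exists>j. j < q \<and> c j \<noteq> 0" by blast
    define j where "j = (LEAST j. j < q \<and> c j \<noteq> 0)"
    have j: "j < q" "c j \<noteq> 0" using LeastI_ex[OF ex] unfolding j_def by blast+
    have below: "c i = 0" if "i < j" for i
    proof -
      have "\<not> (i < q \<and> c i \<noteq> 0)" using not_less_Least[of i "\<lambda>j. j < q \<and> c j \<noteq> 0"] that unfolding j_def by blast
      moreover have "i < q" using that j(1) by simp
      ultimately show ?thesis by blast
    qed
    have fin: "finite V" using assms(1) by (simp add: graph_wf_def)
    have jAB: "A j \<subseteq> V" "B j \<subseteq> V" "A j \<inter> B j = {}" using assms(2)[OF j(1)] by auto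
    have jne: "A j \<noteq> {}" "B j \<noteq> {}" using assms(4)[OF j(1)] by auto
    obtain U where U: "A j \<subseteq> U" "U \<subseteq> V" "U \<inter> B j = {}"
      and Ub: "\<forall>A' B'. A' \<subseteq> V \<longrightarrow> B' \<subseteq> V \<longrightarrow> (\<forall>x\<in>A'. \<forall>y\<in>B'. (x \<in> U \<longleftrightarrow> y \<notin> U)) \<longrightarrow>
        mincut V E w (K_bip A' B') \<le> mincut V E w (K_bip (A j) (B j))"
      using key[OF assms(1) jAB jne] by (elim exE conjE) (rule that)
    have Ubound: "mincut V E w (K_bip A' B') \<le> mincut V E w (K_bip (A j) (B j))"
      if "A' \<subseteq> V" "B' \<subseteq> V" "\<forall>x\<in>A'. \<forall>y\<in>B'. (x \<in> U \<longleftrightarrow> y \<notin> U)" for A' B'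
      using Ub that by blast
    define f :: "'v \<Rightarrow> bit" where "f v = (if v \<in> U then 1 else 0)" for v
    have fne: "f x - f y \<noteq> 0 \<longleftrightarrow> (x \<in> U \<longleftrightarrow> y \<notin> U)" for x y
      unfolding f_def by (cases "x \<in> U"; cases "y \<in> U") simp_all
    have evj: "ev f (P_poly (A j) (B j) (a j) (b j)) = 1"
    proof -
      have aj: "a j \<in> U" "b j \<notin> U" using assms(4)[OF j(1)] U by auto
      have "(\<Prod>y\<in>B j. f (a j) - f y) = 1"
      proof (rule prod.neutral, rule ballI)
        fix y assume "y \<in> B j" then have "y \<notin> U" using U by blast
        then show "f (a j) - f y = 1" using aj by (simp add: f_def)
      qed
      moreover have "(\<Prod>x\<in>A j - {a j}. f x - f (b j)) = 1"
      proof (rule prod.neutral, rule ballI)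
        fix x assume "x \<in> A j - {a j}" then have "x \<in> U" using U by blast
        then show "f x - f (b j) = 1" using aj by (simp add: f_def)
      qed
      ultimately show ?thesis by (simp only: ev_P mult_1)
    qed
    have evi: "ev f (P_poly (A i) (B i) (a i) (b i)) = 0" if i: "j < i" "i < q" for i
    proof (rule ccontr)
      assume nz: "ev f (P_poly (A i) (B i) (a i) (b i)) \<noteq> 0"
      have iV: "A i \<subseteq> V" "B i \<subseteq> V" using assms(2)[OF i(2)] by auto
      have finAB: "finite (B i)" "finite (A i - {a i})" using iV fin finite_subset by auto
      have p1: "(\<Prod>y\<in>B i. f (a i) - f y) \<noteq> 0" and p2: "(\<Prod>x\<in>A i - {a i}. f x - f (b i)) \<noteq> 0"
        using nz by (simp_all only: ev_P mult_eq_0_iff de_Morgan_disj) blast+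
      have h1: "\<forall>y\<in>B i. (a i \<in> U \<longleftrightarrow> y \<notin> U)" using p1 finAB(1) fne by (simp only: prod_zero_iff) blast
      have h2: "\<forall>x\<in>A i - {a i}. (x \<in> U \<longleftrightarrow> b i \<notin> U)" using p2 finAB(2) fne by (simp only: prod_zero_iff) blast
      have "\<forall>x\<in>A i. \<forall>y\<in>B i. (x \<in> U \<longleftrightarrow> y \<notin> U)"
        using h1 h2 assms(4)[OF i(2)] by blast
      from Ubound[OF iV this] assms(5)[OF i] show False by linarith
    qed
    have "0 = ev f (\<Sum>i<q. Const2 (c i) * P_poly (A i) (B i) (a i) (b i))"
      using sum0 by (simp only: ev_zero)
    also have "\<dots> = (\<Sum>i<q. c i * ev f (P_poly (A i) (B i) (a i) (b i)))"
      by (simp only: ev_sum ev_mult ev_Const2)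
    also have "\<dots> = c j * ev f (P_poly (A j) (B j) (a j) (b j))"
    proof -
      have "(\<Sum>i\<in>{..<q} - {j}. c i * ev f (P_poly (A i) (B i) (a i) (b i))) = 0"
      proof (rule sum.neutral, rule ballI)
        fix i assume "i \<in> {..<q} - {j}"
        then have "i < q" "i \<noteq> j" by auto
        then show "c i * ev f (P_poly (A i) (B i) (a i) (b i)) = 0"
          using below evi by (cases "i < j") auto
      qed
      moreover have "j \<in> {..<q}" using j by simp
      ultimately show ?thesis by (simp only: sum.remove[OF finite_lessThan] add_0_right)
    qed
    also have "\<dots> = c j" using evj by simp
    finally show False using j(2) by simp
  qed
qed

end
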